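(* Let $\mathbf{f}$ be the Fibonacci sequence, fixed point of the substitution $0\mapsto01$, $1\mapsto0$. For each $k\ge2$, the smallest integer $C_k\ge1$ such that $\mathbf{f}$ is $(k,C_k)$-balanced is $C_k=2$.
   Context: For positive integers $k,C$, a sequence $\mathbf{x}$ over alphabet $A$ is $(k,C)$-balanced if for all factors $u,v$ of $\mathbf{x}$ with $|u|=|v|$ and every $w\in A^k$, $||u|_w-|v|_w|\le C$, where $|u|_w$ is the number of (possibly overlapping) occurrences of $w$ in $u$. *)

theory Defs
  imports Main
begin

definition occ :: "'a list \<Rightarrow> 'a list \<Rightarrow> nat" where
  "occ w u = card {j. j + length w \<le> length u \<and> take (length w) (drop j u) = w}"

definition factor :: "(nat \<Rightarrow> 'a) \<Rightarrow> nat \<Rightarrow> nat \<Rightarrow> 'a list" where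
  "factor x i n = map x [i..<i+n]"

definition balanced :: "'a set \<Rightarrow> (nat \<Rightarrow> 'a) \<Rightarrow> nat \<Rightarrow> nat \<Rightarrow> bool" where
  "balanced A x k C \<longleftrightarrow>
     (\<forall>i j n w. length w = k \<and> set w \<subseteq> A \<longrightarrow>
        \<bar>int (occ w (factor x i n)) - int (occ w (factor x j n))\<bar> \<le> int C)"

fun fib_sub :: "nat \<Rightarrow> nat list" where
  "fib_sub a = (if a = 0 then [0, 1] else [0])"

definition fib_apply :: "nat list \<Rightarrow> nat list" where
  "fib_apply u = concat (map fib_sub u)"

definition fib_iter :: "nat \<Rightarrow> nat list" where
  "fib_iter n = (fib_apply ^^ n) [0]"

text \<open>The Fibonacci word: the fixed point of the substitution, i.e. the limit of phi^n(0).
  Since phi^n(0) is a prefix of phi^(n+1)(0) and has length at least n+1, letter i is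
  read off phi^(i+1)(0) (any later iterate gives the same letter).\<close>
definition fib_word :: "nat \<Rightarrow> nat" where
  "fib_word i = fib_iter (Suc i) ! i"

end

theory Submission
  imports Defs "HOL-Number_Theory.Fib" "HOL-Number_Theory.Cong" Complex_Main
begin

definition al :: real where "al = (3 - sqrt 5) / 2"
definition be :: real where "be = (sqrt 5 - 1) / 2"

lemma sqrt5_bounds: "2.236 < sqrt 5" "sqrt 5 < 2.2361"
proof -
  show "2.236 < sqrt 5" by (rule real_less_rsqrt) (simp add: power2_eq_square)
  have "sqrt 5 < sqrt (2.2361^2)" by (subst real_sqrt_less_iff) (simp add: power2_eq_square)
  then show "sqrt 5 < 2.2361" by simp
qed

lemma be_facts: "0 < be" "be < 1" "be^2 = 1 - be" "al = 1 - be" "al = be^2"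
  "0.38 < al" "al < 0.382"
proof -
  have s: "sqrt 5 * sqrt 5 = 5" by simp
  show "0 < be" "be < 1" using sqrt5_bounds by (auto simp: be_def)
  show "be^2 = 1 - be" unfolding be_def power2_eq_square
    using s by (simp add: field_simps) 
  show "al = 1 - be" by (simp add: al_def be_def field_simps)
  then show "al = be^2" using \<open>be^2 = 1 - be\<close> by simp
  show "0.38 < al" "al < 0.382" using sqrt5_bounds by (auto simp: al_def)
qed

lemma be_pow_pos: "0 < be ^ n" using be_facts by simp
lemma be_pow_le1: "be ^ n \<le> 1" using be_facts by (simp add: power_le_one)
lemma be_pow_lt1: "0 < n \<Longrightarrow> be ^ n < 1" using be_facts by (simp add: power_less_one_iff)
lemma be_pow_mono: "m \<le> n \<Longrightarrow> be ^ n \<le> be ^ m"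
  using be_facts by (simp add: power_decreasing)
lemma be_pow_strict: "m < n \<Longrightarrow> be ^ n < be ^ m"
  using be_facts by (simp add: power_strict_decreasing)
lemma be_pow_rec: "be ^ (n+2) = be ^ n - be ^ (n+1)"
proof -
  have "be ^ (n+2) = be^n * be^2" by (rule power_add)
  also have "\<dots> = be^n * (1 - be)" using be_facts(3) by simp
  finally show ?thesis by (simp add: algebra_simps)
qed
lemma be_pow_ge2: "2 \<le> n \<Longrightarrow> be ^ n \<le> al"
  using be_pow_mono[of 2 n] be_facts by simp

lemma fib_al: "real (fib (n+2)) * al - real (fib n) = (-be)^(n+2)"
proof -
  have "real (fib (n+2)) * al - real (fib n) = (-be)^(n+2) \<and>
        real (fib (n+3)) * al - real (fib (n+1)) = (-be)^(n+3)"
  proof (induction n)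
    case 0
    have "real (fib 3) = 2" by (simp add: numeral_3_eq_3)
    moreover have "(-be)^3 = 1 - 2 * be"
    proof -
      have b2: "be * be = 1 - be" using be_facts(3) by (simp add: power2_eq_square)
      have "(-be)^3 = - (be * (be * be))" by (simp add: power3_eq_cube)
      also have "\<dots> = - (be * (1 - be))" using b2 by simp
      also have "\<dots> = - be + be * be" by (simp add: algebra_simps)
      also have "\<dots> = 1 - 2 * be" using b2 by simp
      finally show ?thesis .
    qed
    ultimately show ?case using be_facts by (simp add: power2_eq_square)
  next
    case (Suc n)
    have f: "fib (Suc n + 3) = fib (n+3) + fib (n+2)"
      by (simp add: numeral_3_eq_3 numeral_2_eq_2)
    have f2: "fib (Suc n + 1) = fib (n+1) + fib n"
      by (simp add: numeral_2_eq_2)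
    have "real (fib (Suc n + 3)) * al - real (fib (Suc n + 1)) =
          (real (fib (n+3)) * al - real (fib (n+1))) + (real (fib (n+2)) * al - real (fib n))"
      by (simp only: f f2 of_nat_add) (simp add: algebra_simps)
    also have "\<dots> = (-be)^(n+3) + (-be)^(n+2)" using Suc by simp
    also have "\<dots> = (-be)^(n+2) * (1 - be)"
    proof -
      have h: "(-be)^(n+3) = (-be)^(n+2) * (-be)" by (simp add: numeral_3_eq_3 numeral_2_eq_2 mult.commute)
      have gen: "\<And>x::real. x*(-be) + x = x*(1-be)" by (simp add: algebra_simps)
      show ?thesis unfolding h by (rule gen)
    qed
    also have "\<dots> = (-be)^(n+2) * (-be)^2" using be_facts by simp
    also have "\<dots> = (-be)^(n+2+2)" by (rule power_add[symmetric])
    also have "n+2+2 = Suc n + 3" by simp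
    finally have B: "real (fib (Suc n + 3)) * al - real (fib (Suc n + 1)) = (-be)^(Suc n + 3)" .
    have e1: "Suc n + 2 = n + 3" by simp
    have e2: "Suc n = n + 1" by simp
    have A: "real (fib (Suc n + 2)) * al - real (fib (Suc n)) = (-be)^(Suc n + 2)"
      unfolding e1 unfolding e2 by (rule conjunct2[OF Suc.IH])
    show ?case by (rule conjI[OF A B])
  qed
  then show ?thesis by simp
qed

lemma fib_al': "real (fib (n+2)) * al = real (fib n) + (-be)^(n+2)"
  using fib_al[of n] by simp

lemma fib_al3: "real (fib (n+3)) * al = real (fib (n+1)) + (-be)^(n+3)"
proof -
  have h: "n + 3 = (n+1) + 2" by simp
  show ?thesis unfolding h by (rule fib_al')
qed

lemma frac_fib: "frac (real (fib (n+2)) * al) = (if even n then be^(n+2) else 1 - be^(n+2))"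
proof (cases "even n")
  case True
  then have "(-be)^(n+2) = be^(n+2)" by simp
  then show ?thesis using True fib_al'[of n] be_pow_pos[of "n+2"] be_pow_lt1[of "n+2"]
    by (simp add: frac_unique_iff)
next
  case False
  then have "(-be)^(n+2) = - (be^(n+2))" by simp
  then have eq: "real (fib (n+2)) * al - (1 - be^(n+2)) = real (fib n) - 1"
    using fib_al'[of n] by simp
  have i: "real (fib n) - 1 \<in> \<int>" by simp
  have d: "real (fib (n+2)) * al - (1 - be^(n+2)) \<in> \<int>" unfolding eq by (rule i)
  have "0 \<le> 1 - be^(n+2)" "1 - be^(n+2) < 1" using be_pow_pos[of "n+2"] be_pow_lt1[of "n+2"] by auto
  then have "frac (real (fib (n+2)) * al) = 1 - be^(n+2)" using d frac_unique_iff by blast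
  then show ?thesis using False by simp
qed

definition good :: "nat \<Rightarrow> nat \<Rightarrow> bool" where
  "good t j \<longleftrightarrow> be^t \<le> frac (real j * al) \<and> frac (real j * al) \<le> 1 - be^t"

lemma good_mono: "good t j \<Longrightarrow> t \<le> t' \<Longrightarrow> good t' j"
  unfolding good_def using be_pow_mono[of t t'] by auto

lemma good_fib: "good (n+2) (fib (n+2))"
proof -
  have "be^(n+2) \<le> al" by (rule be_pow_ge2) simp
  then show ?thesis unfolding good_def frac_fib using be_facts by auto
qed

lemma M_lemma: "0 < j \<Longrightarrow> j < fib (n+3) \<Longrightarrow> j \<noteq> fib (n+2) \<Longrightarrow> good (n+1) j"
proof (induction n arbitrary: j)
  case 0
  then show ?case by (simp add: numeral_3_eq_3 numeral_2_eq_2)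
next
  case (Suc n)
  have f4: "fib (Suc n + 3) = fib (n+3) + fib (n+2)"
    by (simp add: numeral_3_eq_3 numeral_2_eq_2)
  show ?case
  proof (cases "j < fib (n+3)")
    case True
    show ?thesis
    proof (cases "j = fib (n+2)")
      case True
      then show ?thesis using good_fib[of n] by simp
    next
      case False
      with Suc.IH[of j] Suc.prems \<open>j < fib (n+3)\<close> have "good (n+1) j" by simp
      then show ?thesis by (rule good_mono) simp
    qed
  next
    case False
    with Suc.prems have gt: "fib (n+3) < j" by (simp add: numeral_3_eq_3)
    define r where "r = j - fib (n+3)"
    have r0: "0 < r" "r < fib (n+2)" using gt Suc.prems f4 by (auto simp: r_def)
    have "fib (n+2) \<le> fib (n+3)" by (rule fib_mono) simp
    then have "good (n+1) r" using Suc.IH[of r] r0 by simp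
    then have gr: "be^(n+1) \<le> frac (real r * al)" "frac (real r * al) \<le> 1 - be^(n+1)"
      unfolding good_def by auto
    have jr: "j = r + fib (n+3)" using gt by (simp add: r_def)
    have e: "real (fib (n+3)) * al = real (fib (n+1)) + (-be)^(n+3)"
      by (rule fib_al3)
    define e where "e = (-be)^(n+3)"
    have ae: "\<bar>e\<bar> = be^(n+3)" unfolding e_def using be_facts(1) by (simp add: power_abs)
    have rec: "be^(n+3) = be^(n+1) - be^(n+2)" using be_pow_rec[of "n+1"] by (simp add: numeral_3_eq_3 numeral_2_eq_2)
    have p2: "0 < be^(n+2)" by (rule be_pow_pos)
    have jal: "real j * al = real r * al + real (fib (n+1)) + e"
      unfolding jr e_def using e by (simp add: algebra_simps)
    define f where "f = frac (real r * al)"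
    have fr: "frac (real j * al) = f + e"
    proof -
      have "real j * al - (f + e) = of_int \<lfloor>real r * al\<rfloor> + real (fib (n+1))"
        unfolding jal f_def frac_def by simp
      moreover have "of_int \<lfloor>real r * al\<rfloor> + real (fib (n+1)) \<in> \<int>" by simp
      moreover have "0 \<le> f + e" "f + e < 1" using gr ae rec p2 unfolding f_def
        by (auto simp: abs_if split: if_splits)
      ultimately show ?thesis by (simp add: frac_unique_iff)
    qed
    show ?thesis unfolding good_def fr using gr ae rec unfolding f_def
      by (auto simp: abs_if split: if_splits)
  qed
qed

lemma fib_ge: "n \<le> fib (Suc n)"
proof (induction n rule: nat_less_induct)
  case (1 n)
  show ?case
  proof (cases n)
    case 0 then show ?thesis by simp
  next
    case (Suc m)
    show ?thesis
    proof (cases m)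
      case 0 then show ?thesis using Suc by simp
    next
      case (Suc l)
      have "l \<le> fib (Suc l)" "m \<le> fib (Suc m)" using 1 \<open>n = Suc m\<close> Suc by auto
      moreover have "fib (Suc n) = fib (Suc m) + fib (Suc l)" using \<open>n = Suc m\<close> Suc by simp
      moreover have "1 \<le> fib (Suc l)" using fib_neq_0_nat[of "Suc l"] by simp
      ultimately show ?thesis using \<open>n = Suc m\<close> Suc by simp
    qed
  qed
qed

lemma frac_pos: "0 < j \<Longrightarrow> 0 < frac (real j * al)"
proof -
  assume j: "0 < j"
  have eq: "Suc (j+2) = j+3" by simp
  have "j + 2 \<le> fib (j + 3)" using fib_ge[of "j+2"] by (simp only: eq)
  then have jl: "j < fib (j+3)" by simp
  show ?thesis
  proof (cases "j = fib (j+2)")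
    case True
    then show ?thesis using frac_fib[of j] be_pow_pos[of "j+2"] be_pow_lt1[of "j+2"]
      by (auto simp del: fib.simps)
  next
    case False
    then have "good (j+1) j" using M_lemma[OF j jl] by simp
    then show ?thesis unfolding good_def using be_pow_pos[of "j+1"] by linarith
  qed
qed

lemma not_int_nat: "0 < j \<Longrightarrow> real j * al \<notin> \<int>"
  using frac_pos[of j] by simp

lemma not_int_int: "j \<noteq> 0 \<Longrightarrow> real_of_int j * al \<notin> \<int>"
proof -
  assume j: "j \<noteq> 0"
  show ?thesis
  proof (cases "j > 0")
    case True
    then show ?thesis using not_int_nat[of "nat j"] by simp
  next
    case False
    then have "0 < nat (-j)" using j by simp
    then have "real (nat (-j)) * al \<notin> \<int>" by (rule not_int_nat)
    moreover have "real (nat (-j)) * al = - (real_of_int j * al)" using False by simp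
    ultimately show ?thesis using Ints_minus by fastforce
  qed
qed

definition lt :: "nat \<Rightarrow> nat" where
  "lt p = (if frac ((real p + 2) * al) < al then 1 else 0)"

lemma al_pos: "0 < al" and al_lt: "al < 1" and al2: "2 * al < 1" and al3: "1 < 3 * al"
  using be_facts by auto

lemma frac_al: "frac al = al" using al_pos al_lt by (simp add: frac_eq)

lemma lt_floor: "int (lt p) = \<lfloor>(real p + 2) * al\<rfloor> - \<lfloor>(real p + 1) * al\<rfloor>"
proof -
  define y where "y = (real p + 1) * al"
  have e: "(real p + 2) * al = y + al" unfolding y_def by (simp add: algebra_simps)
  have fl0: "\<lfloor>al\<rfloor> = 0" using al_pos al_lt by (simp add: floor_eq_iff)
  have f0: "0 \<le> frac y" by simp
  show ?thesis
  proof (cases "frac y + al < 1")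
    case True
    then have "frac (y + al) = frac y + al" "\<lfloor>y + al\<rfloor> = \<lfloor>y\<rfloor>"
      using frac_add[of y al] floor_add[of y al] frac_al fl0 by auto
    then show ?thesis unfolding lt_def e y_def[symmetric] using f0 by (auto simp del: frac_ge_0)
  next
    case False
    then have "frac (y + al) = frac y + al - 1" "\<lfloor>y + al\<rfloor> = \<lfloor>y\<rfloor> + 1"
      using frac_add[of y al] floor_add[of y al] frac_al fl0 by auto
    then show ?thesis unfolding lt_def e y_def[symmetric] using frac_lt_1[of y] by auto
  qed
qed

lemma floor_shift:
  assumes "b \<le> frac y" "frac y \<le> 1 - b" "\<bar>e\<bar> < b"
  shows "\<lfloor>y + e\<rfloor> = \<lfloor>y\<rfloor>"
proof -
  have "y = of_int \<lfloor>y\<rfloor> + frac y" by (simp add: frac_def)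
  then show ?thesis using assms by (subst floor_eq_iff) (auto simp: abs_if split: if_splits)
qed

lemma lt_small: "lt 0 = 0" "lt 1 = 1" "lt 2 = 0" "lt 3 = 0" "lt 4 = 1"
proof -
  have a: "0.38 < al" "al < 0.382" using be_facts by auto
  have "frac (2 * al) = 2 * al" using a by (simp add: frac_eq)
  then show "lt 0 = 0" unfolding lt_def using a by simp
  have "frac (3 * al) = 3 * al - 1" using a by (simp add: frac_unique_iff)
  then show "lt 1 = 1" unfolding lt_def using a by simp
  have "frac (4 * al) = 4 * al - 1" using a by (simp add: frac_unique_iff)
  then show "lt 2 = 0" unfolding lt_def using a by simp
  have "frac (5 * al) = 5 * al - 1" using a by (simp add: frac_unique_iff)
  then show "lt 3 = 0" unfolding lt_def using a by simp
  have "frac (6 * al) = 6 * al - 2"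
  proof -
    have "6 * al - (6 * al - 2) = (2::real)" by simp
    then have "6 * al - (6 * al - 2) \<in> \<int>" by simp
    then show ?thesis using a by (simp add: frac_unique_iff)
  qed
  then show "lt 4 = 1" unfolding lt_def using a by simp
qed

lemma lt_period:
  assumes "p < fib (n+2)"
  shows "lt (fib (n+3) + p) = lt p"
proof -
  consider "n = 0" | "n = 1" | "2 \<le> n" by linarith
  then show ?thesis
  proof cases
    case 1
    then have "p = 0" using assms by simp
    have "fib (0+3) = 2" by (simp add: numeral_eq_Suc)
    then show ?thesis using 1 \<open>p = 0\<close> lt_small by simp
  next
    case 2
    then have "p = 0 \<or> p = 1" using assms by (auto simp: numeral_3_eq_3)
    moreover have "fib 4 = 3" by (simp add: numeral_eq_Suc)
    ultimately show ?thesis using 2 lt_small by auto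
  next
    case 3
    define Q where "Q = fib (n+3)"
    define e where "e = (-be)^(n+3)"
    have Qal: "real Q * al = real (fib (n+1)) + e" unfolding Q_def e_def by (rule fib_al3)
    have ae: "\<bar>e\<bar> < be^(n+2)"
      unfolding e_def using be_pow_strict[of "n+2" "n+3"] be_facts(1) by (simp add: power_abs)
    have f3: "fib (n+3) = fib (n+2) + fib (n+1)" by (simp add: numeral_3_eq_3 numeral_2_eq_2)
    have f4: "fib (n+4) = fib (n+3) + fib (n+2)" by (simp add: numeral_eq_Suc)
    have "fib 3 \<le> fib (n+1)" by (rule fib_mono) (use 3 in simp)
    then have fn1: "2 \<le> fib (n+1)" by (simp add: numeral_3_eq_3)
    have key: "\<lfloor>real j * al + e\<rfloor> = \<lfloor>real j * al\<rfloor>" if j: "0 < j" "j \<le> fib (n+2) + 1" for j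
    proof -
      have "j < fib (n+1+3)" "j \<noteq> fib (n+1+2)" using j fn1 by (simp_all add: numeral_eq_Suc)
      then have "good (n+1+1) j" using M_lemma[of j "n+1"] j by simp
      then have g: "be^(n+2) \<le> frac (real j * al)" "frac (real j * al) \<le> 1 - be^(n+2)"
        unfolding good_def by (simp_all add: add.assoc)
      show ?thesis by (rule floor_shift[OF g ae])
    qed
    have k1: "\<lfloor>(real p + 1) * al + e\<rfloor> = \<lfloor>(real p + 1) * al\<rfloor>"
      using key[of "p+1"] assms by (simp add: algebra_simps)
    have k2: "\<lfloor>(real p + 2) * al + e\<rfloor> = \<lfloor>(real p + 2) * al\<rfloor>"
      using key[of "p+2"] assms by (simp add: algebra_simps)
    have s1: "(real (Q + p) + 1) * al = (real p + 1) * al + e + real (fib (n+1))"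
      using Qal by (simp add: algebra_simps)
    have s2: "(real (Q + p) + 2) * al = (real p + 2) * al + e + real (fib (n+1))"
      using Qal by (simp add: algebra_simps)
    have t1: "\<lfloor>(real p + 1) * al + e + real (fib (n+1))\<rfloor> = \<lfloor>(real p + 1) * al\<rfloor> + int (fib (n+1))"
      using k1 by simp
    have t2: "\<lfloor>(real p + 2) * al + e + real (fib (n+1))\<rfloor> = \<lfloor>(real p + 2) * al\<rfloor> + int (fib (n+1))"
      using k2 by simp
    have "int (lt (Q + p)) = int (lt p)"
      unfolding lt_floor s1 s2 t1 t2 by simp
    then show ?thesis unfolding Q_def by simp
  qed
qed

lemma fib_apply_app: "fib_apply (u @ v) = fib_apply u @ fib_apply v"
  by (simp add: fib_apply_def)

lemma funpow_app: "(fib_apply ^^ m) (u @ v) = (fib_apply ^^ m) u @ (fib_apply ^^ m) v"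
  by (induction m) (simp_all add: fib_apply_app)

lemma fib_iter_rec: "fib_iter (Suc (Suc n)) = fib_iter (Suc n) @ fib_iter n"
proof -
  have a0: "fib_apply [0] = [0] @ [1]" by (simp add: fib_apply_def)
  have a1: "fib_apply [1] = [0]" by (simp add: fib_apply_def)
  have "fib_iter (Suc (Suc n)) = (fib_apply ^^ Suc n) (fib_apply [0])"
    unfolding fib_iter_def by (simp only: funpow_Suc_right o_apply)
  also have "\<dots> = fib_iter (Suc n) @ (fib_apply ^^ Suc n) [1]"
    unfolding a0 funpow_app fib_iter_def ..
  also have "(fib_apply ^^ Suc n) [1] = fib_iter n"
    unfolding fib_iter_def by (simp only: funpow_Suc_right o_apply a1)
  finally show ?thesis .
qed

lemma fib_iter_map: "fib_iter n = map lt [0..<fib (n+2)]"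
proof -
  have "fib_iter n = map lt [0..<fib (n+2)] \<and> fib_iter (Suc n) = map lt [0..<fib (n+3)]"
  proof (induction n)
    case 0
    have "fib_iter 0 = [0]" by (simp add: fib_iter_def)
    moreover have "fib_iter (Suc 0) = [0,1]" by (simp add: fib_iter_def fib_apply_def)
    moreover have "[0..<fib 3] = [0,1]" by (simp add: numeral_3_eq_3 upt_rec)
    ultimately show ?case using lt_small by simp
  next
    case (Suc n)
    have "fib_iter (Suc (Suc n)) = map lt [0..<fib (n+3)] @ map lt [0..<fib (n+2)]"
      using Suc fib_iter_rec by simp
    also have "map lt [0..<fib (n+2)] = map (\<lambda>p. lt (fib (n+3) + p)) [0..<fib (n+2)]"
      using lt_period[of _ n] by simp
    also have "\<dots> = map lt [fib (n+3)..<fib (n+3) + fib (n+2)]"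
    proof -
      have "map (\<lambda>p. lt (fib (n+3) + p)) [0..<fib (n+2)] = map lt (map (\<lambda>p. p + fib (n+3)) [0..<fib (n+2)])"
        by (simp add: add.commute)
      then show ?thesis by (simp only: map_add_upt) (simp add: add.commute)
    qed
    also have "map lt [0..<fib (n+3)] @ \<dots> = map lt [0..<fib (n+3) + fib (n+2)]"
    proof -
      have "[0..<fib (n+3) + fib (n+2)] = [0..<fib (n+3)] @ [fib (n+3)..<fib (n+3) + fib (n+2)]"
        by (rule upt_add_eq_append) simp
      then show ?thesis by (simp only: map_append)
    qed
    also have "fib (n+3) + fib (n+2) = fib (Suc n + 3)" by (simp add: numeral_eq_Suc)
    finally have A: "fib_iter (Suc (Suc n)) = map lt [0..<fib (Suc n + 3)]" .
    have B: "fib_iter (Suc n) = map lt [0..<fib (Suc n + 2)]"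
      using Suc by (simp add: numeral_eq_Suc)
    show ?case using A B by simp
  qed
  then show ?thesis by simp
qed

lemma fib_word_lt: "fib_word p = lt p"
proof -
  have eq: "Suc (p+2) = Suc p + 2" by simp
  have h: "p + 2 \<le> fib (Suc p + 2)" using fib_ge[of "p+2"] by (simp only: eq)
  show ?thesis unfolding fib_word_def fib_iter_map using h by simp
qed

definition th :: "nat \<Rightarrow> real" where "th p = (real p + 1) * al"

lemma frac_minus_eq: "frac (A - B) = frac (frac A - frac B)"
  using frac_diff[of A B] by simp

lemma lt_shift:
  "lt (p + r) = (if frac (frac (th p + real a * al) - frac ((real a - (real r + 1)) * al)) < al then 1 else 0)"
proof -
  have "(real (p + r) + 2) * al = (th p + real a * al) - ((real a - (real r + 1)) * al)"
    unfolding th_def by (simp add: algebra_simps)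
  then show ?thesis unfolding lt_def
    by (simp only: frac_minus_eq[of "th p + real a * al" "(real a - (real r + 1)) * al"])
qed

lemma cellA_aux:
  assumes y: "0 \<le> y" "y < l" and d: "0 \<le> d" "d < 1" "d = 0 \<or> l \<le> d"
    and d': "frac (d + al) = 0 \<or> l \<le> frac (d + al)"
  shows "(frac (y - d) < al) \<longleftrightarrow> (d = 0 \<or> (1 \<le> d + al \<and> frac (d + al) \<noteq> 0))"
proof (cases "d = 0")
  case True
  have "frac al = al" by (rule frac_al)
  then have la: "l \<le> al" using d' True al_pos by auto
  have "frac y = y" using y la al_lt by (simp add: frac_eq)
  then show ?thesis using True y la by simp
next
  case False
  then have ld: "l \<le> d" using d by auto
  have fy: "frac (y - d) = y - d + 1" using y ld d by (simp add: frac_unique_iff)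
  show ?thesis
  proof (cases "d + al < 1")
    case True
    then show ?thesis using fy y False by auto
  next
    case F2: False
    have fd: "frac (d + al) = d + al - 1" using F2 d al_lt by (simp add: frac_unique_iff)
    show ?thesis using fy fd d' y False F2 by auto
  qed
qed

lemma cellA:
  assumes "0 \<le> y" "y < l" "0 \<le> y'" "y' < l" "0 \<le> d" "d < 1" "d = 0 \<or> l \<le> d"
    "frac (d + al) = 0 \<or> l \<le> frac (d + al)"
  shows "(frac (y - d) < al) \<longleftrightarrow> (frac (y' - d) < al)"
  using cellA_aux[of y l d] cellA_aux[of y' l d] assms by simp

lemma L_i: "0 \<le> y \<Longrightarrow> y < 1 \<Longrightarrow> (frac (y - 0) < al) \<longleftrightarrow> y < al"
  by (simp add: frac_eq)

lemma L_ii: assumes "0 \<le> y" "y < 1"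
  shows "(frac (y - (1 - al)) < al) \<longleftrightarrow> 1 \<le> y + al"
proof -
  have e: "y - (1 - al) = (y + al) + of_int (-1)" by simp
  have f: "frac (y - (1 - al)) = frac (y + al)" unfolding e by (rule frac_add_of_int_right)
  show ?thesis
  proof (cases "y + al < 1")
    case True
    then have "frac (y + al) = y + al" using assms al_pos by (simp add: frac_eq)
    then show ?thesis using f True assms by simp
  next
    case False
    then have "frac (y + al) = y + al - 1" using assms al_lt by (simp add: frac_unique_iff)
    then show ?thesis using f False assms by simp
  qed
qed

lemma L_iii: assumes "0 < l" "l \<le> y" "y < 1" shows "(frac (y - l) < al) \<longleftrightarrow> y - l < al"
  using assms by (simp add: frac_eq)

lemma L_iii0: assumes "0 \<le> y" "y < l" "l \<le> al" shows "\<not> (frac (y - l) < al)"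
proof -
  have "frac (y - l) = y - l + 1" using assms al_lt by (simp add: frac_unique_iff)
  then show ?thesis using assms al2 by simp
qed

lemma L_iv: assumes "0 < l" "l \<le> al" "0 \<le> y" "y < 1"
  shows "(frac (y - frac (l - al)) < al) \<longleftrightarrow> (if y < l then True else 1 \<le> y - l + al)"
proof -
  have f: "frac (y - frac (l - al)) = frac (y - l + al)" by (simp add: frac_diff_simp algebra_simps)
  show ?thesis
  proof (cases "y < l")
    case True
    then have "frac (y - l + al) = y - l + al" using assms al_lt by (simp add: frac_eq)
    then show ?thesis using f True assms by simp
  next
    case False
    show ?thesis
    proof (cases "y - l + al < 1")
      case True
      then have "frac (y - l + al) = y - l + al" using assms False by (simp add: frac_eq)
      then show ?thesis using f True False by simp
    next
      case F2: False
      then have "frac (y - l + al) = y - l + al - 1" using assms False al_lt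
        by (simp add: frac_unique_iff)
      then show ?thesis using f F2 False assms by simp
    qed
  qed
qed

lemma L_v: assumes "0 \<le> y" "y < 1"
  shows "(frac (y - (1 - 2 * al)) < al) \<longleftrightarrow> (1 - 2 * al \<le> y \<and> y < 1 - al)"
proof -
  have e: "y - (1 - 2 * al) = (y + 2 * al) + of_int (-1)" by simp
  have f: "frac (y - (1 - 2 * al)) = frac (y + 2 * al)" unfolding e by (rule frac_add_of_int_right)
  show ?thesis
  proof (cases "y + 2 * al < 1")
    case True
    then have "frac (y + 2 * al) = y + 2 * al" using assms al_pos by (simp add: frac_eq)
    then show ?thesis using f True assms al_pos by auto
  next
    case False
    then have "frac (y + 2 * al) = y + 2 * al - 1" using assms al2 by (simp add: frac_unique_iff)
    then show ?thesis using f False assms by auto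
  qed
qed

lemma frac_neg_al: "frac (- al) = 1 - al"
  using frac_neg[of al] frac_al al_pos al_lt frac_eq_0_iff[of al] by (auto simp del: frac_eq_0_iff)

lemma frac_neg_2al: "frac (- (2 * al)) = 1 - 2 * al"
proof -
  have "frac (2 * al) = 2 * al" using al_pos al2 by (simp add: frac_eq)
  moreover have "frac (2 * al) \<noteq> 0" using calculation al_pos by simp
  ultimately show ?thesis using frac_neg[of "2 * al"] frac_eq_0_iff[of "2*al"] by (auto simp del: frac_eq_0_iff)
qed

lemma cell:
  assumes k2: "2 \<le> k" and ab: "a \<le> k" "b \<le> k"
    and l: "l = frac ((real a - real b) * al)" "0 < l"
    and cut: "\<forall>s\<le>k. frac ((real a - real s) * al) = 0 \<or> l \<le> frac ((real a - real s) * al)"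
    and y0: "frac (th p0 + real a * al) < l"
  shows "(\<forall>r<k. lt (p + r) = lt (p0 + r)) \<longleftrightarrow> frac (th p + real a * al) < l"
proof -
  define Y where "Y q = frac (th q + real a * al)" for q
  define D where "D r = frac ((real a - (real r + 1)) * al)" for r
  have LT: "lt (q + r) = (if frac (Y q - D r) < al then 1 else 0)" for q r
    unfolding Y_def D_def by (rule lt_shift)
  have eqv: "(lt (p + r) = lt (p0 + r)) \<longleftrightarrow> ((frac (Y p - D r) < al) \<longleftrightarrow> (frac (Y p0 - D r) < al))" for r
    unfolding LT by auto
  have Yr: "0 \<le> Y q" "Y q < 1" for q unfolding Y_def by (auto simp: frac_lt_1)
  have y0': "Y p0 < l" using y0 unfolding Y_def by simp
  have Dcut: "D r = 0 \<or> l \<le> D r" if "r < k" for r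
  proof -
    have "r + 1 \<le> k" using that by simp
    then have "frac ((real a - real (r+1)) * al) = 0 \<or> l \<le> frac ((real a - real (r+1)) * al)"
      using cut by blast
    moreover have "real a - (real r + 1) = real a - real (r+1)" by simp
    ultimately show ?thesis unfolding D_def by (simp add: add.commute)
  qed
  have Dnext: "frac (D r + al) = frac ((real a - real r) * al)" for r
  proof -
    have "(real a - (real r + 1)) * al + al = (real a - real r) * al" by (simp add: algebra_simps)
    then show ?thesis unfolding D_def by (simp only: frac_add_simps)
  qed
  have Dnext_cut: "frac (D r + al) = 0 \<or> l \<le> frac (D r + al)" if "r < k" for r
    using cut that unfolding Dnext by simp
  have lal: "l \<le> al"
  proof (cases "1 \<le> a")
    case True
    have "frac ((real a - real (a - 1)) * al) = frac al" using True by (simp add: of_nat_diff)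
    then have "frac ((real a - real (a - 1)) * al) = al" using frac_al by simp
    moreover have "a - 1 \<le> k" using ab by simp
    ultimately have "al = 0 \<or> l \<le> al" using cut by metis
    then show ?thesis using al_pos by simp
  next
    case False
    then have "a = 0" by simp
    have "frac ((real a - real (2::nat)) * al) = 1 - 2 * al" using \<open>a = 0\<close> frac_neg_2al by simp
    moreover have "2 \<le> k" by (rule k2)
    ultimately have "1 - 2 * al = 0 \<or> l \<le> 1 - 2 * al" using cut by metis
    then have "l \<le> 1 - 2 * al" using al2 by simp
    then show ?thesis using al3 by simp
  qed
  show ?thesis
  proof
    assume "frac (th p + real a * al) < l"
    then have yp: "Y p < l" unfolding Y_def by simp
    show "\<forall>r<k. lt (p + r) = lt (p0 + r)"
    proof (intro allI impI)
      fix r assume r: "r < k"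
      have "0 \<le> D r" "D r < 1" unfolding D_def by (auto simp: frac_lt_1)
      have "(frac (Y p - D r) < al) \<longleftrightarrow> (frac (Y p0 - D r) < al)"
        by (rule cellA) (use Yr yp y0' Dcut[OF r] Dnext_cut[OF r] \<open>0 \<le> D r\<close> \<open>D r < 1\<close> in auto)
      then show "lt (p + r) = lt (p0 + r)" using eqv[of r] by simp
    qed
  next
    assume allr: "\<forall>r<k. lt (p + r) = lt (p0 + r)"
    show "frac (th p + real a * al) < l"
    proof (rule ccontr)
      assume "\<not> frac (th p + real a * al) < l"
      then have yl: "l \<le> Y p" unfolding Y_def by simp
      define y where "y = Y p"
      define y' where "y' = Y p0"
      have yb: "0 \<le> y" "y < 1" "l \<le> y" using Yr yl unfolding y_def by auto
      have y'b: "0 \<le> y'" "y' < l" using Yr y0' unfolding y'_def by auto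
      have let_eq: "(frac (y - D r) < al) \<longleftrightarrow> (frac (y' - D r) < al)" if "r < k" for r
      proof -
        have "lt (p + r) = lt (p0 + r)" using allr that by simp
        then show ?thesis using eqv[of r] unfolding y_def y'_def by simp
      qed
      have c1: "y < al" if "1 \<le> a"
      proof -
        have "D (a - 1) = 0" unfolding D_def using that by (simp add: of_nat_diff)
        then have "(frac (y - 0) < al) \<longleftrightarrow> (frac (y' - 0) < al)" using let_eq[of "a-1"] that ab by simp
        then show ?thesis using L_i[of y] L_i[of y'] yb y'b lal by auto
      qed
      have c2: "y + al < 1" if "a < k"
      proof -
        have "D a = frac (- al)" unfolding D_def by simp
        then have "D a = 1 - al" using frac_neg_al by simp
        then have "(frac (y - (1 - al)) < al) \<longleftrightarrow> (frac (y' - (1 - al)) < al)" using let_eq[of a] that by simp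
        then show ?thesis using L_ii[of y] L_ii[of y'] yb y'b lal al2 by auto
      qed
      have c3: "al \<le> y - l" if "1 \<le> b"
      proof -
        have "D (b - 1) = l" unfolding D_def l using that by (simp add: of_nat_diff)
        then have "(frac (y - l) < al) \<longleftrightarrow> (frac (y' - l) < al)" using let_eq[of "b-1"] that ab by simp
        then show ?thesis using L_iii[of l y] L_iii0[of y' l] yb y'b lal l by auto
      qed
      have c4: "1 \<le> y - l + al" if "b < k"
      proof -
        have e1: "(real a - (real b + 1)) * al = (real a - real b) * al - al" by (simp add: algebra_simps)
        have e2: "frac (frac ((real a - real b) * al) - al) = frac ((real a - real b) * al - al)"
          using frac_add_simps(1)[of "(real a - real b) * al" "- al"] by simp
        have "D b = frac (l - al)" unfolding D_def e1 l e2 ..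
        then have "(frac (y - frac (l - al)) < al) \<longleftrightarrow> (frac (y' - frac (l - al)) < al)"
          using let_eq[of b] that by simp
        then show ?thesis using L_iv[of l y] L_iv[of l y'] yb y'b lal l by auto
      qed
      have c5: "\<not> (1 - 2 * al \<le> y \<and> y < 1 - al)" if "a = 0"
      proof -
        have "D 1 = frac (- (2 * al))" unfolding D_def using that by simp
        then have D1: "D 1 = 1 - 2 * al" using frac_neg_2al by simp
        then have "(frac (y - (1 - 2 * al)) < al) \<longleftrightarrow> (frac (y' - (1 - 2 * al)) < al)"
          using let_eq[of 1] k2 by simp
        moreover have "l \<le> 1 - 2 * al" using Dcut[of 1] D1 k2 al2 by auto
        ultimately show ?thesis using L_v[of y] L_v[of y'] yb y'b by auto
      qed
      show False
      proof (cases "1 \<le> a")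
        case True
        show False
        proof (cases "1 \<le> b")
          case True
          then show False using c1 c3 \<open>1 \<le> a\<close> al_pos l(2) by auto
        next
          case False
          then have "b < k" using k2 by simp
          then show False using c1 c4 \<open>1 \<le> a\<close> l lal al2 by auto
        qed
      next
        case False
        then have a0: "a = 0" by simp
        then have ak: "a < k" using k2 by simp
        show False
        proof (cases "b < k")
          case True
          then show False using c2 c4 ak l(2) by auto
        next
          case False
          then have "1 \<le> b" using k2 by simp
          then show False using c2 c3 c5 ak a0 al3 l(2) by auto
        qed
      qed
    qed
  qed
qed

lemma th_eq: "th p0 + real s * al = real (p0 + 1 + s) * al"
  unfolding th_def by (simp add: algebra_simps)

lemma frac_inj_al:
  assumes "frac (real s * al + c) = frac (real s' * al + c)"
  shows "s = s'"
proof (rule ccontr)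
  assume ne: "s \<noteq> s'"
  obtain m where m: "real s * al + c = real s' * al + c + of_int m" using assms by (rule frac_eqE)
  then have "real_of_int (int s - int s') * al = of_int m" by (simp add: algebra_simps)
  then have "real_of_int (int s - int s') * al \<in> \<int>" by simp
  moreover have "int s - int s' \<noteq> 0" using ne by simp
  ultimately show False using not_int_int by blast
qed

lemma cell_exists:
  assumes k: "1 \<le> k"
  shows "\<exists>a b l. a \<le> k \<and> b \<le> k \<and> l = frac ((real a - real b) * al) \<and> 0 < l \<and>
     (\<forall>s\<le>k. frac ((real a - real s) * al) = 0 \<or> l \<le> frac ((real a - real s) * al)) \<and>
     frac (th p0 + real a * al) < l"
proof -
  define F where "F s = frac (th p0 + real s * al)" for s
  have Fpos: "0 < F s" for s unfolding F_def th_eq by (rule frac_pos) simp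
  have Flt: "F s < 1" for s unfolding F_def by (rule frac_lt_1)
  have Finj: "F s = F s' \<Longrightarrow> s = s'" for s s'
    unfolding F_def by (rule frac_inj_al) (simp add: add.commute)
  define A where "A = F ` {..k}"
  have finA: "finite A" "A \<noteq> {}" unfolding A_def by auto
  have "Min A \<in> A" by (rule Min_in[OF finA])
  then obtain a where a0: "a \<in> {..k}" "Min A = F a" unfolding A_def by blast
  then have a: "a \<le> k" "F a = Min A" by auto
  have "Max A \<in> A" by (rule Max_in[OF finA])
  then obtain b where b0: "b \<in> {..k}" "Max A = F b" unfolding A_def by blast
  then have b: "b \<le> k" "F b = Max A" by auto
  have amin: "F a \<le> F s" if "s \<le> k" for s using a finA that unfolding A_def by auto
  have bmax: "F s \<le> F b" if "s \<le> k" for s using b finA that unfolding A_def by auto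
  have ab: "F a < F b"
  proof -
    have "F 0 \<noteq> F 1" using Finj by fastforce
    then show ?thesis using amin[of 0] amin[of 1] bmax[of 0] bmax[of 1] k by fastforce
  qed
  have dif: "frac ((real a - real s) * al) = frac (F a - F s)" for s
  proof -
    have "(real a - real s) * al = (th p0 + real a * al) - (th p0 + real s * al)" by (simp add: algebra_simps)
    then show ?thesis unfolding F_def by (simp only: frac_minus_eq[of "th p0 + real a * al" "th p0 + real s * al"])
  qed
  have neg: "frac (F a - F s) = F a - F s + 1" if "F a < F s" for s
    using that Fpos[of a] Flt[of s] by (simp add: frac_unique_iff)
  define l where "l = frac ((real a - real b) * al)"
  have l: "l = F a - F b + 1" unfolding l_def dif using neg[OF ab] .
  show ?thesis
  proof (intro exI conjI)
    show "a \<le> k" "b \<le> k" by (fact a(1)) (fact b(1))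
    show "l = frac ((real a - real b) * al)" by (fact l_def)
    show "0 < l" using l Flt[of b] Fpos[of a] by simp
    show "frac (th p0 + real a * al) < l" using l Flt[of b] unfolding F_def by simp
    show "\<forall>s\<le>k. frac ((real a - real s) * al) = 0 \<or> l \<le> frac ((real a - real s) * al)"
    proof (intro allI impI)
      fix s assume s: "s \<le> k"
      show "frac ((real a - real s) * al) = 0 \<or> l \<le> frac ((real a - real s) * al)"
      proof (cases "F a = F s")
        case True
        then show ?thesis unfolding dif by simp
      next
        case False
        then have "F a < F s" using amin[OF s] by simp
        then show ?thesis unfolding dif neg[OF \<open>F a < F s\<close>] l using bmax[OF s] by simp
      qed
    qed
  qed
qed

lemma fib_between: "1 \<le> q \<Longrightarrow> \<exists>n. fib (n+2) \<le> q \<and> q < fib (n+3)"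
proof (induction q)
  case 0 then show ?case by simp
next
  case (Suc q)
  show ?case
  proof (cases "q = 0")
    case True
    then show ?thesis by (intro exI[of _ 0]) (simp add: numeral_3_eq_3)
  next
    case False
    then obtain n where n: "fib (n+2) \<le> q" "q < fib (n+3)" using Suc by auto
    show ?thesis
    proof (cases "Suc q < fib (n+3)")
      case True
      then show ?thesis using n by (intro exI[of _ n]) simp
    next
      case False
      then have e: "Suc q = fib (n+3)" using n by simp
      have "fib (n+1+2) \<le> Suc q" using e by (simp add: numeral_eq_Suc)
      moreover have "Suc q < fib (n+1+3)" using e fib_neq_0_nat[of "n+2"] by (simp add: numeral_eq_Suc)
      ultimately show ?thesis by blast
    qed
  qed
qed

lemma not_fib_between:
  assumes "1 \<le> q" "\<forall>n. q \<noteq> fib (n+2)"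
  shows "\<exists>n. fib (n+2) < q \<and> q < fib (n+3)"
  using fib_between[OF assms(1)] assms(2) le_neq_implies_less by blast

lemma frac_neg_nat: "0 < j \<Longrightarrow> frac (- (real j * al)) = 1 - frac (real j * al)"
  using frac_neg[of "real j * al"] not_int_nat[of j] by simp

lemma rec_min:
  assumes q: "1 \<le> q" and h: "\<forall>j. 0 < j \<and> j < q \<longrightarrow> frac (real q * al) < frac (real j * al)"
  shows "\<exists>n. q = fib (n+2)"
proof (rule ccontr)
  assume "\<not> (\<exists>n. q = fib (n+2))"
  then obtain n where n: "fib (n+2) < q" "q < fib (n+3)" using not_fib_between[OF q] by auto
  have "good (n+1) q" using M_lemma[of q n] n q by simp
  then have g: "be^(n+1) \<le> frac (real q * al)" unfolding good_def by simp
  show False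
  proof (cases "even n")
    case True
    have fr: "frac (real (fib (n+2)) * al) = be^(n+2)" using frac_fib[of n] True by simp
    have "0 < fib (n+2)" by (simp add: fib_neq_0_nat)
    then have "frac (real q * al) < frac (real (fib (n+2)) * al)" using h n by blast
    then show False using fr g be_pow_strict[of "n+1" "n+2"] by linarith
  next
    case False
    then have "n \<noteq> 0" by (cases n) simp_all
    from not0_implies_Suc[OF this] obtain m where "n = Suc m" by blast
    then have m: "n = m + 1" by simp
    have "even m" using False m by simp
    then have "frac (real (fib (m+2)) * al) = be^(m+2)" using frac_fib[of m] by simp
    then have fr: "frac (real (fib (n+1)) * al) = be^(n+1)" using m by (simp add: add.assoc)
    have "fib (n+1) \<le> fib (n+2)" by (rule fib_mono) simp
    moreover have "0 < fib (n+1)" by (simp add: fib_neq_0_nat)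
    ultimately have "frac (real q * al) < frac (real (fib (n+1)) * al)" using h n by auto
    then show False using fr g by linarith
  qed
qed

lemma rec_max:
  assumes q: "1 \<le> q" and h: "\<forall>j. 0 < j \<and> j < q \<longrightarrow> frac (- (real q * al)) < frac (- (real j * al))"
  shows "\<exists>n. q = fib (n+2)"
proof (rule ccontr)
  assume "\<not> (\<exists>n. q = fib (n+2))"
  then obtain n where n: "fib (n+2) < q" "q < fib (n+3)" using not_fib_between[OF q] by auto
  have "good (n+1) q" using M_lemma[of q n] n q by simp
  then have g: "be^(n+1) \<le> frac (- (real q * al))" unfolding good_def using frac_neg_nat[of q] q by simp
  show False
  proof (cases "even n")
    case False
    have "frac (real (fib (n+2)) * al) = 1 - be^(n+2)" using frac_fib[of n] False by simp
    then have "frac (- (real (fib (n+2)) * al)) = be^(n+2)"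
      using frac_neg_nat[of "fib (n+2)"] by (simp add: fib_neq_0_nat)
    moreover have "0 < fib (n+2)" by (simp add: fib_neq_0_nat)
    ultimately have fr: "frac (- (real (fib (n+2)) * al)) = be^(n+2)"
      "frac (- (real q * al)) < frac (- (real (fib (n+2)) * al))" using h n by blast+
    then show False using g be_pow_strict[of "n+1" "n+2"] by linarith
  next
    case True
    have "n \<noteq> 0"
    proof
      assume "n = 0"
      then show False using n by (simp add: numeral_3_eq_3)
    qed
    from not0_implies_Suc[OF this] obtain m where "n = Suc m" by blast
    then have m: "n = m + 1" by simp
    have "odd m" using True m by simp
    then have "frac (real (fib (m+2)) * al) = 1 - be^(m+2)" using frac_fib[of m] by simp
    then have fr0: "frac (real (fib (n+1)) * al) = 1 - be^(n+1)" using m by (simp add: add.assoc)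
    have "0 < fib (n+1)" by (simp add: fib_neq_0_nat)
    then have fr: "frac (- (real (fib (n+1)) * al)) = be^(n+1)" using frac_neg_nat[of "fib (n+1)"] fr0 by simp
    have "fib (n+1) \<le> fib (n+2)" by (rule fib_mono) simp
    then have "frac (- (real q * al)) < frac (- (real (fib (n+1)) * al))"
      using h n \<open>0 < fib (n+1)\<close> by auto
    then show False using g fr by linarith
  qed
qed

lemma fib_of_cut:
  assumes ab: "a \<le> k" "b \<le> k" "a \<noteq> b" and l: "l = frac ((real a - real b) * al)"
    and cut: "\<forall>s\<le>k. frac ((real a - real s) * al) = 0 \<or> l \<le> frac ((real a - real s) * al)"
  shows "a < b \<Longrightarrow> \<exists>n. b - a = fib (n+2)" and "b < a \<Longrightarrow> \<exists>n. a - b = fib (n+2)"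
proof -
  assume lt: "a < b"
  define q where "q = b - a"
  have lq: "l = frac (- (real q * al))" unfolding l q_def using lt by (simp add: of_nat_diff algebra_simps)
  show "\<exists>n. b - a = fib (n+2)" unfolding q_def[symmetric]
  proof (rule rec_max)
    show "1 \<le> q" using lt q_def by simp
    show "\<forall>j. 0 < j \<and> j < q \<longrightarrow> frac (- (real q * al)) < frac (- (real j * al))"
    proof (intro allI impI)
      fix j assume j: "0 < j \<and> j < q"
      have "a + j \<le> k" using j ab q_def lt by arith
      then have c: "frac ((real a - real (a + j)) * al) = 0 \<or> l \<le> frac ((real a - real (a + j)) * al)"
        using cut by blast
      have e: "(real a - real (a + j)) * al = - (real j * al)" by (simp add: algebra_simps)
      have nz: "frac (- (real j * al)) \<noteq> 0" using not_int_nat[of j] j by simp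
      have ne: "frac (- (real j * al)) \<noteq> frac (- (real q * al))"
      proof
        assume "frac (- (real j * al)) = frac (- (real q * al))"
        then have "frac (real j * al) = frac (real q * al)" using frac_neg_eq_iff by blast
        then have "frac (real j * al + 0) = frac (real q * al + 0)" by simp
        then have "j = q" by (rule frac_inj_al)
        then show False using j by simp
      qed
      show "frac (- (real q * al)) < frac (- (real j * al))" using c nz ne lq unfolding e by auto
    qed
  qed
next
  assume lt: "b < a"
  define q where "q = a - b"
  have lq: "l = frac (real q * al)" unfolding l q_def using lt by (simp add: of_nat_diff)
  show "\<exists>n. a - b = fib (n+2)" unfolding q_def[symmetric]
  proof (rule rec_min)
    show "1 \<le> q" using lt q_def by simp
    show "\<forall>j. 0 < j \<and> j < q \<longrightarrow> frac (real q * al) < frac (real j * al)"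
    proof (intro allI impI)
      fix j assume j: "0 < j \<and> j < q"
      have "a - j \<le> k" using j ab q_def by simp
      then have c: "frac ((real a - real (a - j)) * al) = 0 \<or> l \<le> frac ((real a - real (a - j)) * al)"
        using cut by blast
      have "j \<le> a" using j q_def by arith
      then have e: "(real a - real (a - j)) * al = real j * al" by (simp add: of_nat_diff)
      have nz: "frac (real j * al) \<noteq> 0" using not_int_nat[of j] j by simp
      have ne: "frac (real j * al) \<noteq> frac (real q * al)"
      proof
        assume "frac (real j * al) = frac (real q * al)"
        then have "frac (real j * al + 0) = frac (real q * al + 0)" by simp
        then have "j = q" by (rule frac_inj_al)
        then show False using j by simp
      qed
      show "frac (real q * al) < frac (real j * al)" using c nz ne lq unfolding e by auto
    qed
  qed
qed

lemma hermite:
  fixes x :: real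
  assumes q: "0 < q"
  shows "(\<Sum>i<q. \<lfloor>x + real i / real q\<rfloor>) = \<lfloor>real q * x\<rfloor>"
proof -
  define N where "N = \<lfloor>real q * x\<rfloor>"
  define A where "A = N div int q"
  define B where "B = N mod int q"
  have NAB: "N = int q * A + B" unfolding A_def B_def by simp
  have B0: "0 \<le> B" "B < int q" unfolding B_def using q by auto
  have Nx: "real_of_int N \<le> real q * x" "real q * x < real_of_int N + 1" unfolding N_def by linarith+
  have Q: "0 < real q" using q by simp
  have tm: "\<lfloor>x + real i / real q\<rfloor> = A + (if int q \<le> int i + B then 1 else 0)" if i: "i < q" for i
  proof -
    define z where "z = A + (if int q \<le> int i + B then 1 else 0)"
    have e: "x + real i / real q = (real q * x + real i) / real q" using Q by (simp add: field_simps)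
    have lo: "real_of_int (int q * z) \<le> real q * x + real i"
    proof -
      have "int q * z \<le> N + int i" unfolding z_def NAB using B0 by (auto simp: algebra_simps)
      then have "real_of_int (int q * z) \<le> real_of_int N + real i" by linarith
      then show ?thesis using Nx by linarith
    qed
    have hi: "real q * x + real i < real_of_int (int q * (z + 1))"
    proof -
      have "N + int i + 1 \<le> int q * (z + 1)" unfolding z_def NAB using B0 i by (auto simp: algebra_simps)
      then have "real_of_int N + real i + 1 \<le> real_of_int (int q * (z + 1))" by linarith
      then show ?thesis using Nx by linarith
    qed
    have "real_of_int z \<le> (real q * x + real i) / real q"
      using lo Q by (simp add: field_simps)
    moreover have "(real q * x + real i) / real q < real_of_int z + 1"
      using hi Q by (simp add: field_simps)
    ultimately have "\<lfloor>(real q * x + real i) / real q\<rfloor> = z" by (simp add: floor_eq_iff)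
    then show ?thesis unfolding e z_def .
  qed
  have "(\<Sum>i<q. \<lfloor>x + real i / real q\<rfloor>) = (\<Sum>i<q. A + (if int q \<le> int i + B then 1 else 0))"
    using tm by (intro sum.cong) auto
  also have "\<dots> = int q * A + (\<Sum>i<q. (if int q \<le> int i + B then 1 else 0))"
    by (simp add: sum.distrib)
  also have "(\<Sum>i<q. (if int q \<le> int i + B then 1 else 0::int)) = int (card {q - nat B..<q})"
  proof -
    have "(\<Sum>i<q. (if int q \<le> int i + B then 1 else 0::int)) = (\<Sum>i\<in>{..<q} \<inter> {i. int q \<le> int i + B}. 1)"
      by (simp add: sum.If_cases)
    also have "{..<q} \<inter> {i. int q \<le> int i + B} = {q - nat B..<q}" using B0 by auto
    finally show ?thesis by simp
  qed
  also have "int (card {q - nat B..<q}) = B" using B0 by simp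
  finally show ?thesis using NAB N_def by simp
qed

lemma reindex_mod:
  fixes q P :: nat
  assumes q: "0 < q" and cp: "coprime P q"
  shows "(\<Sum>j<q. f (j * P mod q)) = (\<Sum>i<q. f i)"
proof -
  have inj: "inj_on (\<lambda>j. j * P mod q) {..<q}"
  proof
    fix x y assume xy: "x \<in> {..<q}" "y \<in> {..<q}" "x * P mod q = y * P mod q"
    then have "[x * P = y * P] (mod q)" by (simp add: cong_def)
    then have "[x = y] (mod q)" using cong_mult_rcancel_nat[OF cp] by simp
    then show "x = y" using xy cong_less_modulus_unique_nat by auto
  qed
  have "(\<lambda>j. j * P mod q) ` {..<q} \<subseteq> {..<q}" using q by auto
  then have "(\<lambda>j. j * P mod q) ` {..<q} = {..<q}" using endo_inj_surj[OF _ _ inj] by simp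
  then have "bij_betw (\<lambda>j. j * P mod q) {..<q} {..<q}" using inj by (simp add: bij_betw_def)
  then show ?thesis by (rule sum.reindex_bij_betw)
qed

lemma coprime_fib2: "coprime (fib n) (fib (n+2))"
proof -
  have "gcd (fib n) (fib (2 + n)) = gcd (fib n) (fib 2)" by (rule gcd_fib_add)
  then have "gcd (fib n) (fib (n+2)) = 1" by (simp add: add.commute)
  then show ?thesis by (simp add: coprime_iff_gcd_eq_1)
qed

lemma gamma_bound: "(real (fib m) - 1) * be^m \<le> 1/2"
proof -
  define s where "s = sqrt 5"
  have s2: "2 < s" unfolding s_def using sqrt5_bounds by simp
  have ss: "s * s = 5" unfolding s_def by simp
  define ph where "ph = (1 + s) / 2"
  have phbe: "ph * be = 1" unfolding ph_def be_def s_def[symmetric] using ss by (simp add: field_simps)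
  have psi: "(1 - s) / 2 = - be" unfolding be_def s_def by (simp add: field_simps)
  have cf: "real (fib m) = (ph ^ m - (- be) ^ m) / s"
    using fib_closed_form[of m] unfolding ph_def s_def psi[unfolded s_def] by simp
  have sn: "s \<noteq> 0" using s2 by simp
  have "real (fib m) * be^m = (ph^m * be^m - (-be)^m * be^m) / s"
    unfolding cf using sn by (simp add: field_simps)
  also have "ph^m * be^m = (ph * be)^m" by (rule power_mult_distrib[symmetric])
  also have "(-be)^m * be^m = ((-be) * be)^m" by (rule power_mult_distrib[symmetric])
  also have "(-be) * be = - (be * be)" by simp
  finally have fe: "real (fib m) * be^m = (1 - (- (be * be))^m) / s" using phbe by simp
  have bm: "0 < be^m" "be^m \<le> 1" using be_pow_pos be_pow_le1 by auto
  have "\<bar>(- (be * be))^m\<bar> = be^m * be^m" by (simp add: power_abs power_mult_distrib abs_mult)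
  also have "\<dots> \<le> be^m" using bm by (simp add: mult_le_cancel_left1)
  finally have "- ((- (be * be))^m) \<le> be^m" by linarith
  then have num: "1 - (- (be * be))^m \<le> 1 + be^m" by linarith
  have "(1 - (- (be * be))^m) / s \<le> (1 + be^m) / s" using num s2 by (simp add: divide_right_mono)
  also have "\<dots> \<le> (1 + be^m) / 2" using s2 bm by (intro divide_left_mono) auto
  finally have "real (fib m) * be^m \<le> (1 + be^m) / 2" using fe by simp
  then show ?thesis using bm by (simp add: algebra_simps)
qed

lemma key:
  fixes z z' :: real
  assumes q: "q = fib (n+2)"
  shows "\<bar>(real_of_int (\<Sum>j<q. \<lfloor>z + real j * al\<rfloor>) - real q * z) -
          (real_of_int (\<Sum>j<q. \<lfloor>z' + real j * al\<rfloor>) - real q * z')\<bar> < 3/2"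
proof -
  define P where "P = fib n"
  define e where "e = (-be)^(n+2)"
  have qpos: "0 < q" using q by (simp add: fib_neq_0_nat)
  have Q: "0 < real q" using qpos by simp
  have Qal: "real q * al = real P + e" using fib_al'[of n] q unfolding P_def e_def by simp
  have cp: "coprime P q" unfolding P_def q by (rule coprime_fib2)
  define g where "g = (real q - 1) * be^(n+2)"
  have g12: "g \<le> 1/2" unfolding g_def q by (rule gamma_bound)
  have g0: "0 \<le> g" unfolding g_def using qpos be_pow_pos[of "n+2"] by simp
  have ae: "\<bar>e\<bar> = be^(n+2)" unfolding e_def power_abs abs_minus_cancel using be_facts(1) by simp
  define r where "r j = j * P mod q" for j
  define S where "S y = (\<Sum>j<q. \<lfloor>y + real (r j) / real q + real j * e / real q\<rfloor>)" for y
  define K where "K = (\<Sum>j<q. int (j * P div q))"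
  have split: "(\<Sum>j<q. \<lfloor>y + real j * al\<rfloor>) = K + S y" for y
  proof -
    have t: "\<lfloor>y + real j * al\<rfloor> = int (j * P div q) + \<lfloor>y + real (r j) / real q + real j * e / real q\<rfloor>" for j
    proof -
      have dm: "j * P = j * P div q * q + r j" unfolding r_def by simp
      have al_eq: "al = (real P + e) / real q" using Qal Q by (simp add: field_simps)
      have "real j * al = real j * (real P + e) / real q" by (simp add: al_eq)
      also have "\<dots> = (real (j * P) + real j * e) / real q" by (simp add: algebra_simps)
      also have "\<dots> = real (j * P div q) + real (r j) / real q + real j * e / real q"
        using Q by (subst dm) (simp add: field_simps)
      finally have "y + real j * al = (y + real (r j) / real q + real j * e / real q) + real_of_int (int (j * P div q))"
        by simp
      then show ?thesis by (simp only: floor_add_int[symmetric])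
    qed
    show ?thesis unfolding S_def K_def t by (simp add: sum.distrib)
  qed
  have herm: "(\<Sum>j<q. \<lfloor>y + real (r j) / real q\<rfloor>) = \<lfloor>real q * y\<rfloor>" for y
    using reindex_mod[OF qpos cp, of "\<lambda>i. \<lfloor>y + real i / real q\<rfloor>"] hermite[OF qpos, of y]
    unfolding r_def by simp
  have ej: "\<bar>real j * e / real q\<bar> \<le> g / real q" if "j < q" for j
  proof -
    have "real j \<le> real q - 1" using that by linarith
    then have "real j * be^(n+2) \<le> (real q - 1) * be^(n+2)"
      using be_pow_pos[of "n+2"] by (intro mult_right_mono) auto
    then have "\<bar>real j * e\<bar> \<le> g" unfolding g_def by (simp add: abs_mult ae)
    then show ?thesis using Q by (simp add: divide_right_mono abs_divide)
  qed
  define lo where "lo = (if 0 \<le> e then -1 else -1 - g)"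
  have bnd: "lo < real_of_int (S y) - real q * y \<and> real_of_int (S y) - real q * y \<le> lo + 1 + g" for y
  proof (cases "0 \<le> e")
    case True
    have l1: "\<lfloor>y + real (r j) / real q\<rfloor> \<le> \<lfloor>y + real (r j) / real q + real j * e / real q\<rfloor>" if "j < q" for j
      using True Q by (intro floor_mono) (simp add: zero_le_divide_iff)
    have l2: "\<lfloor>y + real (r j) / real q + real j * e / real q\<rfloor> \<le> \<lfloor>(y + g / real q) + real (r j) / real q\<rfloor>" if "j < q" for j
      using abs_le_D1[OF ej[OF that]] by (intro floor_mono) simp
    have "\<lfloor>real q * y\<rfloor> \<le> S y" unfolding S_def herm[symmetric] by (rule sum_mono) (use l1 in auto)
    moreover have "S y \<le> \<lfloor>real q * (y + g / real q)\<rfloor>" unfolding S_def herm[symmetric] by (rule sum_mono) (use l2 in auto)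
    moreover have "real q * (y + g / real q) = real q * y + g" using Q by (simp add: field_simps)
    ultimately have "real q * y - 1 < real_of_int (S y)" "real_of_int (S y) \<le> real q * y + g"
      by linarith+
    then show ?thesis unfolding lo_def using True by simp
  next
    case False
    have l1: "\<lfloor>(y - g / real q) + real (r j) / real q\<rfloor> \<le> \<lfloor>y + real (r j) / real q + real j * e / real q\<rfloor>" if "j < q" for j
      using abs_le_D2[OF ej[OF that]] by (intro floor_mono) simp
    have l2: "\<lfloor>y + real (r j) / real q + real j * e / real q\<rfloor> \<le> \<lfloor>y + real (r j) / real q\<rfloor>" if "j < q" for j
    proof -
      have "real j * e / real q \<le> 0" using False Q by (simp add: divide_nonpos_pos mult_nonneg_nonpos)
      then show ?thesis by (intro floor_mono) simp
    qed
    have "\<lfloor>real q * (y - g / real q)\<rfloor> \<le> S y" unfolding S_def herm[symmetric] by (rule sum_mono) (use l1 in auto)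
    moreover have "S y \<le> \<lfloor>real q * y\<rfloor>" unfolding S_def herm[symmetric] by (rule sum_mono) (use l2 in auto)
    moreover have "real q * (y - g / real q) = real q * y - g" using Q by (simp add: field_simps)
    ultimately have "real q * y - g - 1 < real_of_int (S y)" "real_of_int (S y) \<le> real q * y"
      by linarith+
    then show ?thesis unfolding lo_def using False by simp
  qed
  have "\<bar>(real_of_int (S z) - real q * z) - (real_of_int (S z') - real q * z')\<bar> < 1 + g"
    using bnd[of z] bnd[of z'] by linarith
  moreover have "(real_of_int (K + S z) - real q * z) - (real_of_int (K + S z') - real q * z') =
     (real_of_int (S z) - real q * z) - (real_of_int (S z') - real q * z')" by simp
  ultimately show ?thesis unfolding split using g12 by linarith
qed

lemma occ_factor:
  "occ w (factor x i n) = card {j. j < Suc n - length w \<and> (\<forall>r<length w. x (i + j + r) = w ! r)}"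
proof -
  define u where "u = factor x i n"
  have lu: "length u = n" unfolding u_def factor_def by simp
  have nth_u: "u ! p = x (i + p)" if "p < n" for p unfolding u_def factor_def using that by simp
  have "{j. j + length w \<le> length u \<and> take (length w) (drop j u) = w} =
        {j. j < Suc n - length w \<and> (\<forall>r<length w. x (i + j + r) = w ! r)}"
  proof (intro Collect_cong iffI conjI)
    fix j assume h: "j + length w \<le> length u \<and> take (length w) (drop j u) = w"
    then show "j < Suc n - length w" using lu by arith
    show "\<forall>r<length w. x (i + j + r) = w ! r"
    proof (intro allI impI)
      fix r assume r: "r < length w"
      have jl0: "j + length w \<le> length u" using h by simp
      have "w ! r = take (length w) (drop j u) ! r" using h by simp
      also have "\<dots> = u ! (j + r)" using r jl0 by simp
      also have "\<dots> = x (i + j + r)" using nth_u[of "j + r"] r h lu by (simp add: add.assoc)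
      finally show "x (i + j + r) = w ! r" by simp
    qed
  next
    fix j assume h: "j < Suc n - length w \<and> (\<forall>r<length w. x (i + j + r) = w ! r)"
    then show jl: "j + length w \<le> length u" using lu by arith
    show "take (length w) (drop j u) = w"
    proof (rule nth_equalityI)
      show "length (take (length w) (drop j u)) = length w" using jl by simp
      fix r assume "r < length (take (length w) (drop j u))"
      then have r: "r < length w" by simp
      have "take (length w) (drop j u) ! r = u ! (j + r)" using r jl by simp
      also have "\<dots> = x (i + j + r)" using nth_u[of "j + r"] r jl lu by (simp add: add.assoc)
      also have "\<dots> = w ! r" using h r by simp
      finally show "take (length w) (drop j u) ! r = w ! r" .
    qed
  qed
  then show ?thesis unfolding occ_def u_def[symmetric] by simp
qed

lemma card_sum_ind: "int (card {j. j < (m::nat) \<and> Q j}) = (\<Sum>j<m. if Q j then 1 else 0)"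
proof -
  have "{j. j < m \<and> Q j} = {x \<in> {..<m}. Q x}" by auto
  moreover have "(\<Sum>x\<in>{x \<in> {..<m}. Q x}. (1::int)) = (\<Sum>x<m. if Q x then 1 else 0)"
    by (rule sum.inter_filter) simp
  ultimately show ?thesis by simp
qed

lemma ind_floor:
  assumes l: "l = frac D" "0 < l"
  shows "(if frac y < l then 1 else 0::int) = \<lfloor>y\<rfloor> - \<lfloor>y - D\<rfloor> - \<lfloor>D\<rfloor>"
proof -
  have yl: "y - l = (y - D) + of_int \<lfloor>D\<rfloor>" unfolding l frac_def by simp
  have e: "\<lfloor>y - l\<rfloor> = \<lfloor>y - D\<rfloor> + \<lfloor>D\<rfloor>" unfolding yl by (rule floor_add_int[symmetric])
  have l1: "l < 1" using l frac_lt_1 by simp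
  have y: "y = of_int \<lfloor>y\<rfloor> + frac y" by (simp add: frac_def)
  have "\<lfloor>y - l\<rfloor> = (if frac y < l then \<lfloor>y\<rfloor> - 1 else \<lfloor>y\<rfloor>)"
  proof (cases "frac y < l")
    case True
    then show ?thesis using y l1 frac_ge_0[of y] by (subst floor_eq_iff) (auto simp del: frac_ge_0)
  next
    case False
    then show ?thesis using y l1 frac_lt_1[of y] l(2) by (subst floor_eq_iff) auto
  qed
  then show ?thesis using e by auto
qed

lemma tele:
  fixes f :: "nat \<Rightarrow> int"
  shows "(\<Sum>j<m. f j - f (q + j)) = (\<Sum>j<q. f j - f (m + j))"
proof -
  have split: "(\<Sum>j<a + b. f j) = (\<Sum>j<a. f j) + (\<Sum>j<b. f (a + j))" for a b
    by (induction b) (simp_all add: add.assoc)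
  have "(\<Sum>j<m. f j) + (\<Sum>j<q. f (m + j)) = (\<Sum>j<q. f j) + (\<Sum>j<m. f (q + j))"
    using split[of m q] split[of q m] by (simp add: add.commute)
  then show ?thesis by (simp add: sum_subtractf)
qed

definition G :: "nat \<Rightarrow> int" where "G u = \<lfloor>real u * al\<rfloor>"

lemma bound2:
  assumes q: "q = fib (n+2)"
  shows "\<bar>(\<Sum>j<m. G (u + j) - G (u + q + j)) - (\<Sum>j<m. G (u' + j) - G (u' + q + j))\<bar> \<le> 2"
proof -
  define Ph where "Ph z = (\<Sum>j<q. \<lfloor>z + real j * al\<rfloor>)" for z
  define W where "W z = real_of_int (Ph z) - real q * z" for z
  have gs: "(\<Sum>j<q. G (v + j)) = Ph (real v * al)" for v
    unfolding Ph_def G_def by (simp add: algebra_simps)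
  have T: "(\<Sum>j<m. G (v + j) - G (v + q + j)) = Ph (real v * al) - Ph (real (v + m) * al)" for v
  proof -
    have "(\<Sum>j<m. G (v + j) - G (v + q + j)) = (\<Sum>j<m. (\<lambda>x. G (v + x)) j - (\<lambda>x. G (v + x)) (q + j))"
      by (simp add: add.assoc)
    also have "\<dots> = (\<Sum>j<q. G (v + j) - G (v + (m + j)))" by (rule tele)
    also have "\<dots> = (\<Sum>j<q. G (v + j)) - (\<Sum>j<q. G ((v + m) + j))" by (simp add: sum_subtractf add.assoc)
    finally show ?thesis unfolding gs .
  qed
  define z1 where "z1 = real u * al"
  define z2 where "z2 = real (u + m) * al"
  define z3 where "z3 = real u' * al"
  define z4 where "z4 = real (u' + m) * al"
  have k1: "\<bar>W z1 - W z3\<bar> < 3/2" unfolding W_def Ph_def by (rule key[OF q])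
  have k2: "\<bar>W z2 - W z4\<bar> < 3/2" unfolding W_def Ph_def by (rule key[OF q])
  have zz: "z1 - z2 - z3 + z4 = 0" unfolding z1_def z2_def z3_def z4_def by (simp add: algebra_simps)
  define D where "D = (Ph z1 - Ph z2) - (Ph z3 - Ph z4)"
  have "real_of_int D = (W z1 - W z3) - (W z2 - W z4) + real q * (z1 - z2 - z3 + z4)"
    unfolding D_def W_def by (simp add: algebra_simps)
  then have Dq: "real_of_int D = (W z1 - W z3) - (W z2 - W z4)" using zz by simp
  have "W z1 - W z3 < 3/2 \<and> - (W z1 - W z3) < 3/2" using k1 by (simp only: abs_less_iff)
  moreover have "W z2 - W z4 < 3/2 \<and> - (W z2 - W z4) < 3/2" using k2 by (simp only: abs_less_iff)
  ultimately have "\<bar>real_of_int D\<bar> < 3" unfolding Dq abs_less_iff by linarith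
  then have "\<bar>D\<bar> < 3" by linarith
  then have "\<bar>D\<bar> \<le> 2" by simp
  then show ?thesis unfolding T D_def z1_def z2_def z3_def z4_def .
qed

lemma fw01: "fib_word p \<in> {0, 1}" unfolding fib_word_lt lt_def by simp

lemma pattern_cell:
  assumes k2: "2 \<le> k" and P0: "\<forall>r<k. fib_word (p0 + r) = w ! r"
  obtains a b l where "a \<le> k" "b \<le> k" "l = frac ((real a - real b) * al)" "0 < l"
    "\<forall>s\<le>k. frac ((real a - real s) * al) = 0 \<or> l \<le> frac ((real a - real s) * al)"
    "frac (th p0 + real a * al) < l"
    "\<And>p. (\<forall>r<k. fib_word (p + r) = w ! r) \<longleftrightarrow> frac (th p + real a * al) < l"
proof -
  obtain a b l where c: "a \<le> k" "b \<le> k" "l = frac ((real a - real b) * al)" "0 < l"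
    "\<forall>s\<le>k. frac ((real a - real s) * al) = 0 \<or> l \<le> frac ((real a - real s) * al)"
    "frac (th p0 + real a * al) < l"
    using cell_exists[of k p0] k2 by auto
  have "(\<forall>r<k. fib_word (p + r) = w ! r) \<longleftrightarrow> frac (th p + real a * al) < l" for p
  proof -
    have "(\<forall>r<k. fib_word (p + r) = w ! r) \<longleftrightarrow> (\<forall>r<k. lt (p + r) = lt (p0 + r))"
      using P0 unfolding fib_word_lt by auto
    also have "\<dots> \<longleftrightarrow> frac (th p + real a * al) < l" by (rule cell[OF k2 c])
    finally show ?thesis .
  qed
  then show ?thesis using that c by blast
qed

lemma upper:
  assumes k2: "2 \<le> k" and lw: "length w = k"
  shows "\<bar>int (occ w (factor fib_word i n)) - int (occ w (factor fib_word i' n))\<bar> \<le> 2"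
proof -
  define m where "m = Suc n - k"
  define Pw where "Pw p = (\<forall>r<k. fib_word (p + r) = w ! r)" for p
  have occ: "occ w (factor fib_word v n) = card {j. j < m \<and> Pw (v + j)}" for v
    unfolding occ_factor lw m_def Pw_def by (simp add: add.assoc)
  show ?thesis
  proof (cases "\<exists>p0. Pw p0")
    case False
    then show ?thesis unfolding occ by simp
  next
    case True
    then obtain p0 where "Pw p0" by blast
    then obtain a b l where c: "a \<le> k" "b \<le> k" "l = frac ((real a - real b) * al)" "0 < l"
      "\<forall>s\<le>k. frac ((real a - real s) * al) = 0 \<or> l \<le> frac ((real a - real s) * al)"
      and eqv: "\<And>p. Pw p \<longleftrightarrow> frac (th p + real a * al) < l"
      using pattern_cell[OF k2, of p0 w] unfolding Pw_def by metis
    have ab: "a \<noteq> b" using c(3,4) by auto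
    define c0 where "c0 = \<lfloor>(real a - real b) * al\<rfloor>"
    have N: "int (card {j. j < m \<and> Pw (v + j)}) = (\<Sum>j<m. G (v + 1 + a + j) - G (v + 1 + b + j)) - int m * c0" for v
    proof -
      have "int (card {j. j < m \<and> Pw (v + j)}) = (\<Sum>j<m. if frac (th (v + j) + real a * al) < l then 1 else 0)"
        unfolding card_sum_ind eqv ..
      also have "\<dots> = (\<Sum>j<m. G (v + 1 + a + j) - G (v + 1 + b + j) - c0)"
      proof (rule sum.cong[OF refl])
        fix j
        have e1: "th (v + j) + real a * al = real (v + 1 + a + j) * al" unfolding th_def by (simp add: algebra_simps)
        have e2: "th (v + j) + real a * al - (real a - real b) * al = real (v + 1 + b + j) * al"
          unfolding th_def by (simp add: algebra_simps)
        show "(if frac (th (v + j) + real a * al) < l then 1 else 0) = G (v + 1 + a + j) - G (v + 1 + b + j) - c0"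
          unfolding ind_floor[OF c(3,4)] e2 unfolding e1 G_def c0_def ..
      qed
      also have "\<dots> = (\<Sum>j<m. G (v + 1 + a + j) - G (v + 1 + b + j)) - int m * c0"
        by (simp add: sum_subtractf)
      finally show ?thesis .
    qed
    have X: "\<bar>(\<Sum>j<m. G (i + 1 + a + j) - G (i + 1 + b + j)) - (\<Sum>j<m. G (i' + 1 + a + j) - G (i' + 1 + b + j))\<bar> \<le> 2"
    proof (cases "a < b")
      case True
      then obtain n' where q: "b - a = fib (n'+2)" using fib_of_cut(1)[OF c(1) c(2) ab c(3) c(5) True] by blast
      have e: "v + 1 + b + j = (v + 1 + a) + (b - a) + j" for v j using True by simp
      show ?thesis unfolding e by (rule bound2[OF q])
    next
      case False
      then have ba: "b < a" using ab by simp
      then obtain n' where q: "a - b = fib (n'+2)" using fib_of_cut(2)[OF c(1) c(2) ab c(3) c(5) ba] by blast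
      have e: "v + 1 + a + j = (v + 1 + b) + (a - b) + j" for v j using ba by simp
      have neg: "(\<Sum>j<m. G (v + 1 + a + j) - G (v + 1 + b + j)) =
          - (\<Sum>j<m. G ((v + 1 + b) + j) - G ((v + 1 + b) + (a - b) + j))" for v
        unfolding e by (simp add: sum_negf[symmetric] add.assoc)
      have "\<bar>(\<Sum>j<m. G ((i + 1 + b) + j) - G ((i + 1 + b) + (a - b) + j)) -
             (\<Sum>j<m. G ((i' + 1 + b) + j) - G ((i' + 1 + b) + (a - b) + j))\<bar> \<le> 2"
        by (rule bound2[OF q])
      then show ?thesis unfolding neg minus_diff_minus abs_minus_cancel .
    qed
    have Y: "int (card {j. j < m \<and> Pw (i + j)}) - int (card {j. j < m \<and> Pw (i' + j)}) =
      (\<Sum>j<m. G (i + 1 + a + j) - G (i + 1 + b + j)) - (\<Sum>j<m. G (i' + 1 + a + j) - G (i' + 1 + b + j))"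
      using N[of i] N[of i'] by linarith
    show ?thesis unfolding occ Y by (rule X)
  qed
qed

lemma choose_t: "2 \<le> k \<Longrightarrow> \<exists>n. odd n \<and> fib (n+2) \<le> k \<and> k < fib (n+4)"
proof (induction k)
  case 0 then show ?case by simp
next
  case (Suc k)
  show ?case
  proof (cases "k < 2")
    case True
    then have "Suc k = 2" using Suc.prems by simp
    moreover have "fib (1+2) = 2" "fib (1+4) = 5" by (simp_all add: numeral_eq_Suc)
    ultimately show ?thesis by (intro exI[of _ 1]) simp
  next
    case False
    then obtain n where n: "odd n" "fib (n+2) \<le> k" "k < fib (n+4)" using Suc.IH by auto
    show ?thesis
    proof (cases "Suc k < fib (n+4)")
      case True
      then show ?thesis using n by (intro exI[of _ n]) simp
    next
      case F: False
      then have e: "Suc k = fib (n+4)" using n by simp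
      have "odd (n+2)" using n by simp
      moreover have "fib (n+2+2) \<le> Suc k" using e by (simp add: numeral_eq_Suc)
      moreover have "Suc k < fib (n+2+4)" using e fib_neq_0_nat[of "Suc n"] by (simp add: numeral_eq_Suc)
      ultimately show ?thesis by blast
    qed
  qed
qed

lemma be_rec3: "be^(n+3) = be^(n+1) - be^(n+2)"
  using be_pow_rec[of "n+1"] by (simp add: numeral_3_eq_3 numeral_2_eq_2)

lemma be_rec5: "be^(n+5) = be^(n+3) - be^(n+4)"
  using be_pow_rec[of "n+3"] by (simp add: numeral_eq_Suc)

lemma be_rec4: "be^(n+4) = be^(n+2) - be^(n+3)"
  using be_pow_rec[of "n+2"] by (simp add: numeral_eq_Suc)

lemma lower:
  assumes k2: "2 \<le> k"
  shows "\<not> balanced {0, 1} fib_word k 1"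
proof
  assume bal: "balanced {0, 1} fib_word k 1"
  obtain n where n: "odd n" "fib (n+2) \<le> k" "k < fib (n+4)" using choose_t[OF k2] by blast
  have n1: "1 \<le> n" using n(1) by (cases n) auto
  define F where "F = fib (n+2)"
  define p0 where "p0 = fib (n+5) - 1"
  define l where "l = be^(n+2)"
  have Fpos: "0 < F" unfolding F_def by (simp add: fib_neq_0_nat)
  have fib5pos: "0 < fib (n+5)" by (simp add: fib_neq_0_nat)
  have bp: "0 < be^m" for m by (rule be_pow_pos)
  have rec2: "be^(m+2) = be^m - be^(m+1)" for m by (rule be_pow_rec)
  have fa2: "frac (real F * al) = 1 - be^(n+2)" unfolding F_def using frac_fib[of n] n(1) by simp
  have fa3: "real (fib (n+3)) * al = real (fib (n+1)) + be^(n+3)"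
    using fib_al3[of n] n(1) by simp
  have fa5: "real (fib (n+5)) * al = real (fib (n+3)) + be^(n+5)"
  proof -
    have h: "n + 5 = (n+3) + 2" by simp
    have "real (fib ((n+3)+2)) * al = real (fib (n+3)) + (-be)^((n+3)+2)" by (rule fib_al')
    then show ?thesis unfolding h[symmetric] using n(1) by simp
  qed
  have lF: "l = frac ((real 0 - real F) * al)"
    using frac_neg_nat[OF Fpos] fa2 unfolding l_def by simp
  have l0: "0 < l" unfolding l_def by (rule be_pow_pos)
  have Fk: "F \<le> k" unfolding F_def by (rule n(2))
  have f4: "fib (n+4) = fib (n+3) + fib (n+2)" by (simp add: numeral_eq_Suc)
  have fn2: "2 \<le> fib (n+2)"
  proof -
    have "fib 3 \<le> fib (n+2)" by (rule fib_mono) (use n1 in simp)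
    then show ?thesis by (simp add: numeral_3_eq_3)
  qed
  have b3small: "be^(n+3) < 1/4"
  proof -
    have "be^(n+3) \<le> be^3" by (rule be_pow_mono) simp
    also have "be^3 = be * be^2" by (simp add: power3_eq_cube power2_eq_square)
    also have "\<dots> = be * al" using be_facts by simp
    also have "\<dots> < 0.62 * 0.382"
      by (rule mult_strict_mono) (use be_facts in auto)
    also have "\<dots> < 1/4" by simp
    finally show ?thesis .
  qed
  have cut: "\<forall>s\<le>k. frac ((real 0 - real s) * al) = 0 \<or> l \<le> frac ((real 0 - real s) * al)"
  proof (intro allI impI)
    fix s assume s: "s \<le> k"
    show "frac ((real 0 - real s) * al) = 0 \<or> l \<le> frac ((real 0 - real s) * al)"
    proof (cases "s = 0")
      case True then show ?thesis by simp
    next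
      case False
      then have sp: "0 < s" by simp
      have fs: "frac ((real 0 - real s) * al) = 1 - frac (real s * al)" using frac_neg_nat[OF sp] by simp
      show ?thesis
      proof (cases "s = fib (n+3)")
        case True
        have "frac (real s * al) = be^(n+3)"
          using True fa3 bp[of "n+3"] be_pow_lt1[of "n+3"] by (simp add: frac_unique_iff)
        moreover have "be^(n+2) + be^(n+3) \<le> 1" using be_rec3[of n] be_pow_le1[of "n+1"] by linarith
        ultimately show ?thesis unfolding fs l_def by simp
      next
        case False
        have h3: "n+1+3 = n+4" and h2: "n+1+2 = n+3" and h1: "n+1+1 = n+2" by simp_all
        have "good (n+2) s" using M_lemma[of s "n+1"] sp s n(3) False unfolding h3 h2 h1 by simp
        then have "frac (real s * al) \<le> 1 - be^(n+2)" unfolding good_def by simp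
        then show ?thesis unfolding fs l_def by simp
      qed
    qed
  qed
  have thp0: "th p0 = real (fib (n+5)) * al" unfolding th_def p0_def using fib5pos by (simp add: of_nat_diff)
  have y0: "frac (th p0 + real 0 * al) < l"
  proof -
    have "frac (th p0 + real 0 * al) = be^(n+5)" unfolding thp0 fa5
      using bp[of "n+5"] be_pow_lt1[of "n+5"] by (simp add: frac_unique_iff)
    then show ?thesis unfolding l_def using be_pow_strict[of "n+2" "n+5"] by simp
  qed
  have cellp: "(\<forall>r<k. lt (p + r) = lt (p0 + r)) \<longleftrightarrow> frac (th p + real 0 * al) < l" for p
    by (rule cell[OF k2 _ Fk lF l0 cut y0]) simp
  define w where "w = map fib_word [p0..<p0+k]"
  have lw: "length w = k" unfolding w_def by simp
  have sw: "set w \<subseteq> {0, 1}" unfolding w_def set_map image_subset_iff using fw01 by blast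
  have wr: "w ! r = lt (p0 + r)" if "r < k" for r unfolding w_def fib_word_lt using that by simp
  have Pw: "(\<forall>r<k. fib_word (p + r) = w ! r) \<longleftrightarrow> frac (th p) < l" for p
  proof -
    have "(\<forall>r<k. fib_word (p + r) = w ! r) \<longleftrightarrow> (\<forall>r<k. lt (p + r) = lt (p0 + r))"
      using wr unfolding fib_word_lt by auto
    then show ?thesis using cellp[of p] by simp
  qed
  define m where "m = fib (n+3) + 1"
  define N where "N = m + k - 1"
  have mN: "Suc N - k = m" unfolding N_def using k2 by simp
  have occ: "occ w (factor fib_word v N) = card {j. j < m \<and> frac (th (v + j)) < l}" for v
  proof -
    have e: "(\<forall>r<k. fib_word (v + j + r) = w ! r) \<longleftrightarrow> frac (th (v + j)) < l" for j using Pw[of "v + j"] .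
    show ?thesis unfolding occ_factor lw mN by (simp only: e)
  qed
  have thj: "th (v + j) = real (v + 1 + j) * al" for v j unfolding th_def by (simp add: algebra_simps)
  have o1: "frac (th (p0 + 0)) < l" using y0 by simp
  have o2: "frac (th (p0 + fib (n+3))) < l"
  proof -
    have "p0 + 1 = fib (n+5)" unfolding p0_def using fib5pos by simp
    then have "th (p0 + fib (n+3)) = real (fib (n+5)) * al + real (fib (n+3)) * al"
      unfolding thj by (simp add: algebra_simps)
    also have "\<dots> = real (fib (n+3) + fib (n+1)) + (be^(n+5) + be^(n+3))" unfolding fa5 fa3 by simp
    finally have e: "th (p0 + fib (n+3)) = real (fib (n+3) + fib (n+1)) + (be^(n+5) + be^(n+3))" .
    have s1: "be^(n+5) + be^(n+3) < be^(n+2)"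
      using be_rec4[of n] be_pow_strict[of "n+4" "n+5"] by linarith
    have "frac (th (p0 + fib (n+3))) = be^(n+5) + be^(n+3)"
      unfolding e using s1 bp[of "n+5"] bp[of "n+3"] be_pow_le1[of "n+2"]
      by (simp add: frac_unique_iff)
    then show ?thesis using s1 unfolding l_def by simp
  qed
  have c1: "2 \<le> card {j. j < m \<and> frac (th (p0 + j)) < l}"
  proof -
    have sub: "{0, fib (n+3)} \<subseteq> {j. j < m \<and> frac (th (p0 + j)) < l}"
      using o1 o2 unfolding m_def by auto
    have fin: "finite {j. j < m \<and> frac (th (p0 + j)) < l}" by simp
    have "card {0, fib (n+3)} = 2" using fib_neq_0_nat[of "n+3"] by simp
    then show ?thesis using card_mono[OF fin sub] by simp
  qed
  have c2: "card {j. j < m \<and> frac (th (fib (n+3) + j)) < l} = 0"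
  proof -
    have "\<not> frac (th (fib (n+3) + j)) < l" if j: "j < m" for j
    proof -
      define v where "v = j + 1"
      have v: "0 < v" "v \<le> fib (n+3) + 1" using j unfolding v_def m_def by auto
      have e: "th (fib (n+3) + j) = real (fib (n+1)) + (be^(n+3) + real v * al)"
        unfolding thj v_def using fa3 by (simp add: algebra_simps)
      show ?thesis
      proof (cases "v = fib (n+3)")
        case True
        then have e2: "th (fib (n+3) + j) = real (fib (n+1) + fib (n+1)) + 2 * be^(n+3)"
          unfolding e using fa3 by simp
        have "frac (th (fib (n+3) + j)) = 2 * be^(n+3)"
          unfolding e2 using b3small bp[of "n+3"] by (simp add: frac_unique_iff)
        moreover have "be^(n+2) \<le> 2 * be^(n+3)"
        proof -
          have h0: "be^(n+3) = be * be^(n+2)" by (simp add: numeral_3_eq_3 numeral_2_eq_2)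
          have b1: "1 \<le> 2 * be" using be_facts(4,7) by simp
          have "1 * be^(n+2) \<le> (2 * be) * be^(n+2)"
            by (rule mult_right_mono[OF b1]) (use bp[of "n+2"] in simp)
          then show ?thesis using h0 by simp
        qed
        ultimately show ?thesis unfolding l_def by simp
      next
        case False
        have h3: "n+1+3 = n+4" and h2: "n+1+2 = n+3" and h1: "n+1+1 = n+2" by simp_all
        have vl: "v < fib (n+4)" using v f4 fn2 by linarith
        have "good (n+2) v" using M_lemma[of v "n+1"] v vl False unfolding h3 h2 h1 by simp
        then have g: "be^(n+2) \<le> frac (real v * al)" "frac (real v * al) \<le> 1 - be^(n+2)"
          unfolding good_def by simp_all
        have lt1: "frac (real v * al) + be^(n+3) < 1"
          using g be_pow_strict[of "n+2" "n+3"] by simp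
        have "frac (th (fib (n+3) + j)) = frac (real v * al) + be^(n+3)"
        proof -
          have "th (fib (n+3) + j) - (frac (real v * al) + be^(n+3)) = real (fib (n+1)) + of_int \<lfloor>real v * al\<rfloor>"
            unfolding e frac_def by simp
          moreover have "real (fib (n+1)) + of_int \<lfloor>real v * al\<rfloor> \<in> \<int>" by simp
          ultimately show ?thesis using lt1 bp[of "n+3"] frac_ge_0[of "real v * al"]
            by (simp add: frac_unique_iff del: frac_ge_0)
        qed
        then show ?thesis using g bp[of "n+3"] unfolding l_def by simp
      qed
    qed
    then show ?thesis by auto
  qed
  have "\<bar>int (occ w (factor fib_word p0 N)) - int (occ w (factor fib_word (fib (n+3)) N))\<bar> \<le> int 1"
    using bal lw sw unfolding balanced_def by blast
  then show False unfolding occ using c1 c2 by simp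
qed

lemma bal2: "2 \<le> k \<Longrightarrow> balanced {0, 1} fib_word k 2"
  unfolding balanced_def using upper by fastforce

theorem theorem14:
  fixes k :: nat
  assumes "k \<ge> 2"
  shows "(LEAST C::nat. C \<ge> 1 \<and> balanced {0, 1} fib_word k C) = 2"
proof (rule Least_equality)
  show "1 \<le> (2::nat) \<and> balanced {0, 1} fib_word k 2" using bal2[OF assms] by simp
next
  fix C :: nat assume C: "1 \<le> C \<and> balanced {0, 1} fib_word k C"
  show "2 \<le> C"
  proof (rule ccontr)
    assume "\<not> 2 \<le> C"
    then have "C = 1" using C by simp
    then show False using C lower[OF assms] by simp
  qed
qed

end
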